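(* Let $G$ be a graph such that the elementary algebraic cycles of $G$ are the circuits of a matroid $M$ on $E(G)$ (the algebraic cycle matroid of $G$). Then the cocircuits of $M$ are precisely the skew cuts of $G$.
   Context: Matroids may be infinite: a matroid on $E$ is given by $\mathcal I\subseteq 2^E$ with $\emptyset\in\mathcal I$; $\mathcal I$ closed under subsets; for non-maximal $I\in\mathcal I$ and maximal $I'\in\mathcal I$ some $x\in I'\setminus I$ has $I\cup\{x\}\in\mathcal I$; and for every $I\in\mathcal I$ and $I\subseteq X\subseteq E$ the set $\{I'\in\mathcal I:I\subseteq I'\subseteq X\}$ has a maximal element. Circuits are minimal dependent sets; the dual $M^*$ has as bases the complements of bases of $M$; cocircuits of $M$ are the circuits of $M^*$. Graphs may have parallel edges and loops. The elementary algebraic cycles of $G$ are the edge sets of the finite cycles and of the double rays (two-way infinite paths) of $G$. A ray is a one-way infinite path. A cut $E(A,B)$ is the set of edges between the classes $A,B$ of a partition of $V(G)$. A side $A$ of a cut is small if the induced subgraph $G[A]$ contains no ray. A non-empty cut $F$ is skew if one of its sides is small and $F$ is minimal with this property among the non-empty cuts of $G$ (no non-empty cut properly contained in $F$ has a small side). *)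

theory Defs
  imports Main
begin

definition maximal_in :: "'a set set \<Rightarrow> 'a set \<Rightarrow> bool" where
  "maximal_in S X \<longleftrightarrow> X \<in> S \<and> (\<forall>Y\<in>S. X \<subseteq> Y \<longrightarrow> Y = X)"

definition matroid :: "'e set \<Rightarrow> 'e set set \<Rightarrow> bool" where
  "matroid E \<I> \<longleftrightarrow>
     (\<forall>I\<in>\<I>. I \<subseteq> E) \<and>
     {} \<in> \<I> \<and>
     (\<forall>I\<in>\<I>. \<forall>J. J \<subseteq> I \<longrightarrow> J \<in> \<I>) \<and>
     (\<forall>I\<in>\<I>. \<forall>I'. \<not> maximal_in \<I> I \<and> maximal_in \<I> I' \<longrightarrow>
         (\<exists>x\<in>I' - I. insert x I \<in> \<I>)) \<and>
     (\<forall>I\<in>\<I>. \<forall>X. I \<subseteq> X \<and> X \<subseteq> E \<longrightarrow>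
         (\<exists>J. maximal_in {I'\<in>\<I>. I \<subseteq> I' \<and> I' \<subseteq> X} J))"

definition bases :: "'e set set \<Rightarrow> 'e set set" where
  "bases \<I> = {B. maximal_in \<I> B}"

definition circuits :: "'e set \<Rightarrow> 'e set set \<Rightarrow> 'e set set" where
  "circuits E \<I> = {C. C \<subseteq> E \<and> C \<notin> \<I> \<and> (\<forall>D. D \<subset> C \<longrightarrow> D \<in> \<I>)}"

text \<open>Dual matroid: its bases are the complements of the bases of M,
  so its independent sets are the subsets of such complements.\<close>
definition dual_indep :: "'e set \<Rightarrow> 'e set set \<Rightarrow> 'e set set" where
  "dual_indep E \<I> = {J. \<exists>B\<in>bases \<I>. J \<subseteq> E - B}"

definition cocircuits :: "'e set \<Rightarrow> 'e set set \<Rightarrow> 'e set set" where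
  "cocircuits E \<I> = circuits E (dual_indep E \<I>)"

text \<open>A graph is given by a vertex set V, an edge set E and a map assigning
  to each edge its set of end vertices (one end for a loop, two otherwise).\<close>
definition graph :: "'v set \<Rightarrow> 'e set \<Rightarrow> ('e \<Rightarrow> 'v set) \<Rightarrow> bool" where
  "graph V E ends \<longleftrightarrow> (\<forall>e\<in>E. ends e \<subseteq> V \<and> 1 \<le> card (ends e) \<and> card (ends e) \<le> 2)"

text \<open>Edge set of a finite cycle v_0 e_0 v_1 ... v_{n-1} e_{n-1} v_0 (n \<ge> 1;
  n = 1 gives a loop, n = 2 two parallel edges).\<close>
definition finite_cycle_edges :: "'v set \<Rightarrow> 'e set \<Rightarrow> ('e \<Rightarrow> 'v set) \<Rightarrow> 'e set \<Rightarrow> bool" where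
  "finite_cycle_edges V E ends C \<longleftrightarrow>
     (\<exists>n::nat. \<exists>vs es. n \<ge> 1 \<and> inj_on vs {..<n} \<and> inj_on es {..<n} \<and>
        (\<forall>i<n. vs i \<in> V \<and> es i \<in> E \<and> ends (es i) = {vs i, vs (Suc i mod n)}) \<and>
        C = es ` {..<n})"

definition double_ray_edges :: "'v set \<Rightarrow> 'e set \<Rightarrow> ('e \<Rightarrow> 'v set) \<Rightarrow> 'e set \<Rightarrow> bool" where
  "double_ray_edges V E ends D \<longleftrightarrow>
     (\<exists>vs :: int \<Rightarrow> 'v. \<exists>es :: int \<Rightarrow> 'e. inj vs \<and> inj es \<and>
        (\<forall>i. vs i \<in> V \<and> es i \<in> E \<and> ends (es i) = {vs i, vs (i + 1)}) \<and>
        D = range es)"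

definition elementary_algebraic_cycles :: "'v set \<Rightarrow> 'e set \<Rightarrow> ('e \<Rightarrow> 'v set) \<Rightarrow> 'e set set" where
  "elementary_algebraic_cycles V E ends =
     {C. finite_cycle_edges V E ends C \<or> double_ray_edges V E ends C}"

definition has_ray_in :: "'v set \<Rightarrow> 'e set \<Rightarrow> ('e \<Rightarrow> 'v set) \<Rightarrow> 'v set \<Rightarrow> bool" where
  "has_ray_in V E ends A \<longleftrightarrow>
     (\<exists>vs :: nat \<Rightarrow> 'v. \<exists>es :: nat \<Rightarrow> 'e. inj vs \<and> inj es \<and>
        (\<forall>i. vs i \<in> A \<inter> V \<and> es i \<in> E \<and> ends (es i) = {vs i, vs (Suc i)}))"

definition small_side :: "'v set \<Rightarrow> 'e set \<Rightarrow> ('e \<Rightarrow> 'v set) \<Rightarrow> 'v set \<Rightarrow> bool" where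
  "small_side V E ends A \<longleftrightarrow> \<not> has_ray_in V E ends A"

definition cut_edges :: "'e set \<Rightarrow> ('e \<Rightarrow> 'v set) \<Rightarrow> 'v set \<Rightarrow> 'v set \<Rightarrow> 'e set" where
  "cut_edges E ends A B = {e\<in>E. ends e \<inter> A \<noteq> {} \<and> ends e \<inter> B \<noteq> {}}"

definition is_cut :: "'v set \<Rightarrow> 'e set \<Rightarrow> ('e \<Rightarrow> 'v set) \<Rightarrow> 'e set \<Rightarrow> bool" where
  "is_cut V E ends F \<longleftrightarrow>
     (\<exists>A B. A \<union> B = V \<and> A \<inter> B = {} \<and> F = cut_edges E ends A B)"

definition cut_with_small_side :: "'v set \<Rightarrow> 'e set \<Rightarrow> ('e \<Rightarrow> 'v set) \<Rightarrow> 'e set \<Rightarrow> bool" where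
  "cut_with_small_side V E ends F \<longleftrightarrow>
     (\<exists>A B. A \<union> B = V \<and> A \<inter> B = {} \<and> F = cut_edges E ends A B \<and>
        (small_side V E ends A \<or> small_side V E ends B))"

definition skew_cut :: "'v set \<Rightarrow> 'e set \<Rightarrow> ('e \<Rightarrow> 'v set) \<Rightarrow> 'e set \<Rightarrow> bool" where
  "skew_cut V E ends F \<longleftrightarrow>
     F \<noteq> {} \<and> cut_with_small_side V E ends F \<and>
     (\<forall>F'. F' \<subset> F \<and> F' \<noteq> {} \<and> is_cut V E ends F' \<longrightarrow>
        \<not> cut_with_small_side V E ends F')"

end

theory Submission
  imports Defs
begin



locale Mtr =
  fixes E :: "'e set" and I :: "'e set set"
  assumes mat: "matroid E I"
begin

lemma axs:
  "\<forall>X\<in>I. X \<subseteq> E"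
  "{} \<in> I"
  "\<forall>X\<in>I. \<forall>J. J \<subseteq> X \<longrightarrow> J \<in> I"
  "\<forall>X\<in>I. \<forall>B. \<not> maximal_in I X \<and> maximal_in I B \<longrightarrow> (\<exists>x\<in>B - X. insert x X \<in> I)"
  "\<forall>X\<in>I. \<forall>Y. X \<subseteq> Y \<and> Y \<subseteq> E \<longrightarrow> (\<exists>J. maximal_in {I'\<in>I. X \<subseteq> I' \<and> I' \<subseteq> Y} J)"
  using mat unfolding matroid_def apply -
  apply (elim conjE, assumption)+
  done

lemma indep_sub: "X \<in> I \<Longrightarrow> X \<subseteq> E"
  using axs(1) by blast

lemma empty_indep: "{} \<in> I"
  using axs(2) .

lemma indep_subset: "X \<in> I \<Longrightarrow> Y \<subseteq> X \<Longrightarrow> Y \<in> I"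
  using axs(3) by blast

lemma aug: "X \<in> I \<Longrightarrow> \<not> maximal_in I X \<Longrightarrow> maximal_in I B \<Longrightarrow> \<exists>x\<in>B-X. insert x X \<in> I"
  using axs(4) by blast

lemma ext: assumes "X \<in> I" "X \<subseteq> Y" "Y \<subseteq> E"
  shows "\<exists>J. J \<in> I \<and> X \<subseteq> J \<and> J \<subseteq> Y \<and> (\<forall>z\<in>Y-J. insert z J \<notin> I)"
proof -
  obtain J where J: "maximal_in {I'\<in>I. X \<subseteq> I' \<and> I' \<subseteq> Y} J"
    using axs(5) assms by blast
  show ?thesis
  proof (intro exI conjI ballI)
    show "J \<in> I" "X \<subseteq> J" "J \<subseteq> Y" using J unfolding maximal_in_def by auto
    fix z assume z: "z \<in> Y - J"
    show "insert z J \<notin> I"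
    proof
      assume "insert z J \<in> I"
      then have "insert z J = J" using J z unfolding maximal_in_def by auto
      then show False using z by auto
    qed
  qed
qed

lemma base_indep: "maximal_in I B \<Longrightarrow> B \<in> I"
  unfolding maximal_in_def by auto

lemma base_sub: "maximal_in I B \<Longrightarrow> B \<subseteq> E"
  using base_indep indep_sub by blast

lemma base_of_localmax:
  assumes "J \<in> I" "J \<subseteq> Y" "\<forall>z\<in>Y-J. insert z J \<notin> I" "maximal_in I B" "B \<subseteq> Y"
  shows "maximal_in I J"
proof (rule ccontr)
  assume "\<not> maximal_in I J"
  then obtain x where "x \<in> B - J" "insert x J \<in> I" using aug assms by blast
  then show False using assms by auto
qed

lemma base_ext: assumes "X \<in> I" shows "\<exists>B. maximal_in I B \<and> X \<subseteq> B"
proof -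
  obtain J where J: "J \<in> I" "X \<subseteq> J" "J \<subseteq> E" "\<forall>z\<in>E-J. insert z J \<notin> I"
    using ext[OF assms _ order.refl] indep_sub[OF assms] by blast
  have "maximal_in I J" unfolding maximal_in_def
  proof (intro conjI ballI impI)
    show "J \<in> I" by fact
    fix Y assume Y: "Y \<in> I" "J \<subseteq> Y"
    show "Y = J"
    proof (rule ccontr)
      assume "Y \<noteq> J"
      then obtain z where "z \<in> Y - J" using Y by auto
      then have zz: "insert z J \<subseteq> Y" "z \<in> E - J" using Y indep_sub by auto
      then have "insert z J \<in> I" using indep_subset[OF Y(1) zz(1)] by simp
      then show False using J(4) zz(2) by blast
    qed
  qed
  then show ?thesis using J by auto
qed

lemma base_exists: "\<exists>B. maximal_in I B"
  using base_ext empty_indep by blast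

lemma base_insert_dep: "maximal_in I B \<Longrightarrow> x \<notin> B \<Longrightarrow> insert x B \<notin> I"
  unfolding maximal_in_def by blast

lemma fund_circ:
  assumes B: "maximal_in I B" and x: "x \<in> E" "x \<notin> B"
  shows "\<exists>C\<in>circuits E I. x \<in> C \<and> C \<subseteq> insert x B \<and> (\<forall>b\<in>C-{x}. insert x (B-{b}) \<in> I)"
proof -
  define C where "C = insert x {b\<in>B. insert x (B-{b}) \<in> I}"
  have CE: "C \<subseteq> E" using x base_sub[OF B] unfolding C_def by auto
  have Cdep: "C \<notin> I"
  proof
    assume CI: "C \<in> I"
    have "insert x B \<subseteq> E" using x base_sub[OF B] by auto
    moreover have "C \<subseteq> insert x B" unfolding C_def by auto
    ultimately obtain J where J: "J \<in> I" "C \<subseteq> J" "J \<subseteq> insert x B" "\<forall>z\<in>insert x B - J. insert z J \<notin> I"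
      using ext[OF CI, of "insert x B"] by blast
    have JB: "maximal_in I J" using base_of_localmax[OF J(1) J(3) J(4) B] by auto
    have "J \<noteq> insert x B" using J(1) base_insert_dep[OF B x(2)] by auto
    then obtain b where b: "b \<in> insert x B" "b \<notin> J" using J(3) by auto
    have xJ: "x \<in> J" using J(2) unfolding C_def by auto
    then have bB: "b \<in> B" "b \<noteq> x" using b by auto
    have "B - {b} \<in> I" using indep_subset base_indep[OF B] by blast
    moreover have "\<not> maximal_in I (B - {b})"
      using B bB unfolding maximal_in_def by blast
    ultimately obtain y where y: "y \<in> J - (B-{b})" "insert y (B-{b}) \<in> I"
      using aug[OF _ _ JB] by blast
    have "y = x" using y J(3) b by auto
    then have "b \<in> C" using y bB unfolding C_def by auto
    then show False using J(2) b by auto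
  qed
  have Cmin: "\<forall>D. D \<subset> C \<longrightarrow> D \<in> I"
  proof (intro allI impI)
    fix D assume D: "D \<subset> C"
    then obtain z where z: "z \<in> C" "z \<notin> D" by auto
    show "D \<in> I"
    proof (cases "z = x")
      case True
      then have "D \<subseteq> B" using D z unfolding C_def by auto
      then show ?thesis using indep_subset base_indep[OF B] by blast
    next
      case False
      then have "insert x (B-{z}) \<in> I" "z \<in> B" using z unfolding C_def by auto
      moreover have "D \<subseteq> insert x (B-{z})" using D z unfolding C_def by auto
      ultimately show ?thesis using indep_subset by blast
    qed
  qed
  have "C \<in> circuits E I" unfolding circuits_def using CE Cdep Cmin by auto
  moreover have "x \<in> C \<and> C \<subseteq> insert x B \<and> (\<forall>b\<in>C-{x}. insert x (B-{b}) \<in> I)"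
    unfolding C_def by auto
  ultimately show ?thesis by blast
qed

lemma circuit_dep: "C \<in> circuits E I \<Longrightarrow> C \<notin> I"
  unfolding circuits_def by auto

lemma superset_circ_dep: "C \<in> circuits E I \<Longrightarrow> C \<subseteq> X \<Longrightarrow> X \<notin> I"
  using circuit_dep indep_subset by blast

lemma dep_circ:
  assumes "X \<subseteq> E" "X \<notin> I"
  shows "\<exists>C\<in>circuits E I. C \<subseteq> X"
proof -
  obtain J where J: "J \<in> I" "J \<subseteq> X" "\<forall>z\<in>X-J. insert z J \<notin> I"
    using ext[OF empty_indep _ assms(1)] by auto
  have "J \<noteq> X" using J assms by auto
  then obtain x where x: "x \<in> X" "x \<notin> J" using J by auto
  have xJ: "insert x J \<notin> I" using J x by auto
  obtain B where B: "maximal_in I B" "J \<subseteq> B" using base_ext J by blast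
  have "x \<notin> B" using xJ B indep_subset base_indep by (metis insert_subset)
  then obtain C where C: "C \<in> circuits E I" "x \<in> C" "C \<subseteq> insert x B"
      "\<forall>b\<in>C-{x}. insert x (B-{b}) \<in> I"
    using fund_circ[OF B(1)] x assms by blast
  have "C \<subseteq> insert x J"
  proof
    fix b assume b: "b \<in> C"
    show "b \<in> insert x J"
    proof (rule ccontr)
      assume nb: "b \<notin> insert x J"
      then have "insert x (B-{b}) \<in> I" using C b by auto
      moreover have "insert x J \<subseteq> insert x (B-{b})" using B nb by auto
      ultimately show False using xJ indep_subset by blast
    qed
  qed
  then have "C \<subseteq> X" using x(1) J(2) by blast
  then show ?thesis using C(1) by blast
qed

definition hits :: "'e set \<Rightarrow> bool" where
  "hits D \<longleftrightarrow> (\<forall>B. maximal_in I B \<longrightarrow> D \<inter> B \<noteq> {})"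

lemma cocirc_iff:
  "D \<in> cocircuits E I \<longleftrightarrow> D \<subseteq> E \<and> hits D \<and> (\<forall>S. S \<subset> D \<longrightarrow> \<not> hits S)"
proof -
  have a: "X \<subseteq> E \<Longrightarrow> X \<notin> dual_indep E I \<longleftrightarrow> hits X" for X
    unfolding dual_indep_def bases_def hits_def by auto
  have b: "D \<in> cocircuits E I \<longleftrightarrow> D \<subseteq> E \<and> D \<notin> dual_indep E I \<and> (\<forall>S. S \<subset> D \<longrightarrow> S \<in> dual_indep E I)"
    unfolding cocircuits_def circuits_def by auto
  show ?thesis
  proof
    assume "D \<in> cocircuits E I"
    then show "D \<subseteq> E \<and> hits D \<and> (\<forall>S. S \<subset> D \<longrightarrow> \<not> hits S)"
      using a b by (meson order.trans less_imp_le)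
  next
    assume "D \<subseteq> E \<and> hits D \<and> (\<forall>S. S \<subset> D \<longrightarrow> \<not> hits S)"
    then show "D \<in> cocircuits E I"
      using a b by (meson order.trans less_imp_le)
  qed
qed

lemma exch_base:
  assumes K: "maximal_in I K" and "x \<in> K" "f \<notin> K" "insert f (K-{x}) \<in> I"
  shows "maximal_in I (insert f (K-{x}))"
proof (rule ccontr)
  assume "\<not> maximal_in I (insert f (K-{x}))"
  then obtain y where y: "y \<in> K - insert f (K-{x})" "insert y (insert f (K-{x})) \<in> I"
    using aug assms by blast
  then have "y = x" by auto
  then have "insert f K \<in> I" using y assms by (metis insert_Diff insert_commute)
  then show False using base_insert_dep[OF K] assms by auto
qed

lemma cocirc_in:
  assumes S: "S \<subseteq> E" "hits S"
  shows "\<exists>D\<in>cocircuits E I. D \<subseteq> S"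
proof -
  obtain J where J: "J \<in> I" "J \<subseteq> E - S" "\<forall>z\<in>(E-S)-J. insert z J \<notin> I"
    using ext[OF empty_indep, of "E - S"] by blast
  have "\<not> maximal_in I J" using S J unfolding hits_def by blast
  moreover obtain B0 where "maximal_in I B0" using base_exists by blast
  ultimately obtain x where x: "x \<in> B0 - J" "insert x J \<in> I" using aug J by blast
  have xE: "x \<in> E" using x indep_sub by auto
  have xS: "x \<in> S" using x J xE by auto
  obtain K where K: "maximal_in I K" "insert x J \<subseteq> K" using base_ext x by blast
  define C where "C = insert x {f\<in>E-K. insert f (K-{x}) \<in> I}"
  have xK: "x \<in> K" using K by auto
  have CS: "C \<subseteq> S"
  proof
    fix f assume f: "f \<in> C"
    show "f \<in> S"
    proof (rule ccontr)
      assume nf: "f \<notin> S"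
      then have f2: "f \<noteq> x" "f \<in> E - K" "insert f (K-{x}) \<in> I" using f xS unfolding C_def by auto
      then have "f \<in> (E-S)-J" using nf K by auto
      then have "insert f J \<notin> I" using J by auto
      moreover have "insert f J \<subseteq> insert f (K-{x})" using K x by auto
      ultimately show False using f2 indep_subset by blast
    qed
  qed
  have CE: "C \<subseteq> E" using CS S by auto
  have Chits: "hits C" unfolding hits_def
  proof (intro allI impI)
    fix B assume B: "maximal_in I B"
    show "C \<inter> B \<noteq> {}"
    proof
      assume CB: "C \<inter> B = {}"
      then have "x \<notin> B" unfolding C_def by auto
      have "K - {x} \<in> I" using indep_subset base_indep[OF K(1)] by blast
      moreover have "\<not> maximal_in I (K-{x})" using K(1) xK unfolding maximal_in_def by blast
      ultimately obtain y where y: "y \<in> B - (K-{x})" "insert y (K-{x}) \<in> I"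
        using aug B by blast
      have "y \<noteq> x" using y \<open>x \<notin> B\<close> by auto
      then have "y \<in> C" using y base_sub[OF B] unfolding C_def by auto
      then show False using CB y by auto
    qed
  qed
  have Cmin: "\<forall>S'. S' \<subset> C \<longrightarrow> \<not> hits S'"
  proof (intro allI impI)
    fix S' assume S': "S' \<subset> C"
    then obtain z where z: "z \<in> C" "z \<notin> S'" by auto
    show "\<not> hits S'"
    proof (cases "z = x")
      case True
      have "S' \<inter> K = {}" using S' z True unfolding C_def by auto
      then show ?thesis using K unfolding hits_def by auto
    next
      case False
      then have z2: "z \<in> E - K" "insert z (K-{x}) \<in> I" using z unfolding C_def by auto
      have "maximal_in I (insert z (K-{x}))" using exch_base[OF K(1) xK] z2 by auto
      moreover have "S' \<inter> insert z (K-{x}) = {}" using S' z unfolding C_def by auto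
      ultimately show ?thesis unfolding hits_def by auto
    qed
  qed
  have "C \<in> cocircuits E I" using cocirc_iff CE Chits Cmin by auto
  then show ?thesis using CS by auto
qed

lemma orth:
  assumes D: "D \<in> cocircuits E I" and C: "C \<in> circuits E I" and CD: "C \<inter> D = {f}"
  shows False
proof -
  have Dp: "D \<subseteq> E" "hits D" "\<forall>S. S \<subset> D \<longrightarrow> \<not> hits S" using D cocirc_iff by auto
  have fD: "f \<in> D" using CD by auto
  then have "D - {f} \<subset> D" by auto
  then have "\<not> hits (D - {f})" using Dp(3) by blast
  then obtain B where B: "maximal_in I B" "(D-{f}) \<inter> B = {}" unfolding hits_def by blast
  have "D \<inter> B \<noteq> {}" using Dp(2) B unfolding hits_def by auto
  then have fB: "f \<in> B" using B by auto
  have fC: "f \<in> C" using CD by auto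
  have CE: "C \<subseteq> E" using C unfolding circuits_def by auto
  have "C - {f} \<in> I" using C fC unfolding circuits_def by auto
  moreover have "C - {f} \<subseteq> B \<union> C" by auto
  moreover have "B \<union> C \<subseteq> E" using CE base_sub[OF B(1)] by auto
  ultimately obtain J where J: "J \<in> I" "C - {f} \<subseteq> J" "J \<subseteq> B \<union> C" "\<forall>z\<in>(B\<union>C)-J. insert z J \<notin> I"
    using ext[of "C - {f}" "B \<union> C"] by blast
  have JB: "maximal_in I J" using base_of_localmax[OF J(1) J(3) J(4) B(1)] by auto
  have "f \<notin> J"
  proof
    assume "f \<in> J"
    then have "C \<subseteq> J" using J by auto
    then show False using J(1) C superset_circ_dep by blast
  qed
  then have "J \<inter> D = {}"
  proof (intro equalityI subsetI)
    fix z assume z: "z \<in> J \<inter> D"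
    then have "z \<noteq> f" using \<open>f \<notin> J\<close> by auto
    moreover have "z \<in> B \<or> z \<in> C" using z J(3) by auto
    ultimately have "z \<in> (D-{f}) \<inter> B \<or> z \<in> C \<inter> D" using z by auto
    then show "z \<in> {}" using B(2) CD \<open>z \<noteq> f\<close> by auto
  qed auto
  moreover have "D \<inter> J \<noteq> {}" using Dp(2)[unfolded hits_def, rule_format, OF JB] .
  ultimately show False by blast
qed

end



locale GM = Mtr E I for E :: "'e set" and I +
  fixes V :: "'v set" and ends :: "'e \<Rightarrow> 'v set"
  assumes gr: "graph V E ends" and circ: "circuits E I = elementary_algebraic_cycles V E ends"
begin

lemma ends_sub: "e \<in> E \<Longrightarrow> ends e \<subseteq> V"
  using gr unfolding graph_def by blast

lemma ends_cases: assumes "e \<in> E" obtains a b where "ends e = {a, b}"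
proof -
  have c: "1 \<le> card (ends e)" "card (ends e) \<le> 2" using gr assms unfolding graph_def by auto
  then have "card (ends e) = 1 \<or> card (ends e) = 2" by linarith
  then show ?thesis
  proof
    assume "card (ends e) = 1"
    then obtain a where "ends e = {a}" using card_1_singletonE by blast
    then show ?thesis using that[of a a] by simp
  next
    assume "card (ends e) = 2"
    then obtain a b where "ends e = {a, b}" by (meson card_2_iff)
    then show ?thesis using that by blast
  qed
qed

lemma cut_iff:
  assumes "A \<union> B = V" "A \<inter> B = {}" "e \<in> E" "ends e = {a, b}"
  shows "e \<in> cut_edges E ends A B \<longleftrightarrow> ((a \<in> A) \<noteq> (b \<in> A))"
proof -
  have "a \<in> V" "b \<in> V" using ends_sub[OF assms(3)] assms(4) by auto
  then show ?thesis using assms unfolding cut_edges_def by auto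
qed

definition isray :: "'e set \<Rightarrow> 'v set \<Rightarrow> (nat \<Rightarrow> 'v) \<Rightarrow> (nat \<Rightarrow> 'e) \<Rightarrow> bool" where
  "isray S A w r \<longleftrightarrow> inj w \<and> inj r \<and> (\<forall>i. w i \<in> A \<and> r i \<in> S \<and> ends (r i) = {w i, w (Suc i)})"

lemma has_ray_iff: "has_ray_in V E ends A \<longleftrightarrow> (\<exists>w r. isray E (A \<inter> V) w r)"
  unfolding has_ray_in_def isray_def by auto

lemma fc_cross:
  fixes P :: "'v \<Rightarrow> bool"
  assumes n: "k < n" and all: "\<forall>i<n. i \<noteq> k \<longrightarrow> P (vs i) = P (vs (Suc i mod n))"
    and kk: "P (vs k) \<noteq> P (vs (Suc k mod n))"
  shows False
proof -
  have main: "j < n \<Longrightarrow> P (vs ((Suc k + j) mod n)) = P (vs (Suc k mod n))" for j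
  proof (induction j)
    case 0 then show ?case by simp
  next
    case (Suc j)
    define i where "i = (Suc k + j) mod n"
    have ilt: "i < n" using n unfolding i_def by auto
    have ik: "i \<noteq> k"
      unfolding i_def
    proof (cases "Suc k + j < n")
      case True then show "(Suc k + j) mod n \<noteq> k" by simp
    next
      case False
      then have "(Suc k + j) mod n = (Suc k + j - n) mod n" by (simp add: le_mod_geq)
      also have "... = Suc k + j - n" using Suc.prems n by simp
      finally show "(Suc k + j) mod n \<noteq> k" using Suc.prems False by arith
    qed
    have "Suc i mod n = (Suc k + Suc j) mod n" unfolding i_def by (simp add: mod_Suc_eq)
    then have "P (vs ((Suc k + Suc j) mod n)) = P (vs i)" using all ilt ik by metis
    then show ?case using Suc by (simp add: i_def)
  qed
  have "n - 1 < n" using n by auto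
  from main[OF this] have "P (vs ((Suc k + (n - 1)) mod n)) = P (vs (Suc k mod n))" .
  moreover have "(Suc k + (n - 1)) mod n = k" using n by simp
  ultimately show False using kk by simp
qed

lemma dr_tail_fwd:
  fixes P :: "'v \<Rightarrow> bool" and vs :: "int \<Rightarrow> 'v" and es :: "int \<Rightarrow> 'e"
  assumes inj: "inj vs" "inj es" and ed: "\<forall>i. vs i \<in> V \<and> es i \<in> E \<and> ends (es i) = {vs i, vs (i + 1)}"
    and all: "\<forall>i. i \<noteq> k \<longrightarrow> P (vs i) = P (vs (i + 1))"
  shows "isray (range es - {es k}) ({z. P z = P (vs (k+1))} \<inter> V) (\<lambda>n. vs (k + 1 + int n)) (\<lambda>n. es (k + 1 + int n))"
proof -
  have side: "P (vs (k + 1 + int n)) = P (vs (k+1))" for n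
  proof (induction n)
    case 0 then show ?case by simp
  next
    case (Suc n)
    have "k + 1 + int n \<noteq> k" by simp
    then have "P (vs (k + 1 + int n)) = P (vs (k + 1 + int n + 1))" using all by blast
    then show ?case using Suc by (simp add: add.assoc)
  qed
  have i1: "inj (\<lambda>n::nat. vs (k + 1 + int n))"
    by (rule injI) (drule injD[OF inj(1)], simp)
  have i2: "inj (\<lambda>n::nat. es (k + 1 + int n))"
    by (rule injI) (drule injD[OF inj(2)], simp)
  have "es (k + 1 + int n) \<noteq> es k" for n
  proof
    assume "es (k + 1 + int n) = es k"
    then have "k + 1 + int n = k" by (rule injD[OF inj(2)])
    then show False by simp
  qed
  then show ?thesis unfolding isray_def using i1 i2 side ed by (auto simp: add.assoc)
qed

lemma dr_tail_bwd:
  fixes P :: "'v \<Rightarrow> bool" and vs :: "int \<Rightarrow> 'v" and es :: "int \<Rightarrow> 'e"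
  assumes inj: "inj vs" "inj es" and ed: "\<forall>i. vs i \<in> V \<and> es i \<in> E \<and> ends (es i) = {vs i, vs (i + 1)}"
    and all: "\<forall>i. i \<noteq> k \<longrightarrow> P (vs i) = P (vs (i + 1))"
  shows "isray (range es - {es k}) ({z. P z = P (vs k)} \<inter> V) (\<lambda>n. vs (k - int n)) (\<lambda>n. es (k - 1 - int n))"
proof -
  have side: "P (vs (k - int n)) = P (vs k)" for n
  proof (induction n)
    case 0 then show ?case by simp
  next
    case (Suc n)
    have "k - 1 - int n \<noteq> k" by simp
    then have "P (vs (k - 1 - int n)) = P (vs (k - 1 - int n + 1))" using all by blast
    then show ?case using Suc by (simp add: algebra_simps)
  qed
  have i1: "inj (\<lambda>n::nat. vs (k - int n))"
    by (rule injI) (drule injD[OF inj(1)], simp)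
  have i2: "inj (\<lambda>n::nat. es (k - 1 - int n))"
    by (rule injI) (drule injD[OF inj(2)], simp)
  have ne: "es (k - 1 - int n) \<noteq> es k" for n
  proof
    assume "es (k - 1 - int n) = es k"
    then have "k - 1 - int n = k" by (rule injD[OF inj(2)])
    then show False by simp
  qed
  have en: "ends (es (k - 1 - int n)) = {vs (k - int n), vs (k - int (Suc n))}" for n
    using ed[rule_format, of "k - 1 - int n"] by (auto simp: algebra_simps)
  show ?thesis unfolding isray_def using i1 i2 side ed ne en by auto
qed


lemma isray_mono: "isray S A w r \<Longrightarrow> S \<subseteq> S' \<Longrightarrow> A \<subseteq> A' \<Longrightarrow> isray S' A' w r"
  unfolding isray_def by blast

lemma small_cut_hits:
  assumes cs: "cut_with_small_side V E ends F" and Fne: "F \<noteq> {}"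
  shows "hits F"
proof -
  obtain A B where AB: "A \<union> B = V" "A \<inter> B = {}" "F = cut_edges E ends A B"
    and sm: "small_side V E ends A \<or> small_side V E ends B"
    using cs unfolding cut_with_small_side_def by blast
  show ?thesis unfolding hits_def
  proof (intro allI impI)
    fix K assume K: "maximal_in I K"
    show "F \<inter> K \<noteq> {}"
    proof
      assume FK: "F \<inter> K = {}"
      obtain f where fF: "f \<in> F" using Fne by blast
      have fE: "f \<in> E" using fF AB(3) unfolding cut_edges_def by auto
      have fK: "f \<notin> K" using fF FK by blast
      obtain C where C: "C \<in> circuits E I" "f \<in> C" "C \<subseteq> insert f K"
        using fund_circ[OF K fE fK] by blast
      have CF: "g \<in> C \<Longrightarrow> g \<noteq> f \<Longrightarrow> g \<notin> F" for g using C(3) FK by blast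
      have "C \<in> elementary_algebraic_cycles V E ends" using C(1) circ by simp
      then have "finite_cycle_edges V E ends C \<or> double_ray_edges V E ends C"
        unfolding elementary_algebraic_cycles_def by simp
      then show False
      proof
        assume "finite_cycle_edges V E ends C"
        then obtain n vs es where cyc: "n \<ge> 1" "inj_on vs {..<n}" "inj_on es {..<n}"
          "\<forall>i<n. vs i \<in> V \<and> es i \<in> E \<and> ends (es i) = {vs i, vs (Suc i mod n)}" "C = es ` {..<n}"
          unfolding finite_cycle_edges_def by blast
        obtain k where k: "k < n" "es k = f" using C(2) cyc(5) by blast
        have all: "\<forall>i<n. i \<noteq> k \<longrightarrow> (vs i \<in> A) = (vs (Suc i mod n) \<in> A)"
        proof (intro allI impI)
          fix i assume i: "i < n" "i \<noteq> k"
          have "es i \<noteq> f" using cyc(3) i k unfolding inj_on_def by auto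
          then have "es i \<notin> F" using CF cyc(5) i by blast
          then show "(vs i \<in> A) = (vs (Suc i mod n) \<in> A)"
            using cut_iff[OF AB(1,2), of "es i" "vs i" "vs (Suc i mod n)"] cyc(4) i AB(3) by auto
        qed
        have kk: "(vs k \<in> A) \<noteq> (vs (Suc k mod n) \<in> A)"
          using cut_iff[OF AB(1,2), of "es k" "vs k" "vs (Suc k mod n)"] cyc(4) k AB(3) fF by auto
        show False using fc_cross[OF k(1) all kk] .
      next
        assume "double_ray_edges V E ends C"
        then obtain vs :: "int \<Rightarrow> 'v" and es :: "int \<Rightarrow> 'e" where dr: "inj vs" "inj es"
          "\<forall>i. vs i \<in> V \<and> es i \<in> E \<and> ends (es i) = {vs i, vs (i + 1)}" "C = range es"
          unfolding double_ray_edges_def by blast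
        obtain k where k: "es k = f" using C(2) dr(4) by blast
        have all: "\<forall>i. i \<noteq> k \<longrightarrow> (vs i \<in> A) = (vs (i + 1) \<in> A)"
        proof (intro allI impI)
          fix i assume i: "i \<noteq> k"
          have "es i \<noteq> f" using dr(2) i k unfolding inj_def by auto
          then have "es i \<notin> F" using CF dr(4) by blast
          then show "(vs i \<in> A) = (vs (i + 1) \<in> A)"
            using cut_iff[OF AB(1,2), of "es i" "vs i" "vs (i + 1)"] dr(3) AB(3) by auto
        qed
        have kk: "(vs k \<in> A) \<noteq> (vs (k + 1) \<in> A)"
          using cut_iff[OF AB(1,2), of "es k" "vs k" "vs (k + 1)"] dr(3) k AB(3) fF by auto
        have fw: "isray E ({z. (z \<in> A) = (vs (k+1) \<in> A)} \<inter> V) (\<lambda>n. vs (k + 1 + int n)) (\<lambda>n. es (k + 1 + int n))"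
          using isray_mono[OF dr_tail_fwd[OF dr(1,2,3) all]] dr(3) by blast
        have bw: "isray E ({z. (z \<in> A) = (vs k \<in> A)} \<inter> V) (\<lambda>n. vs (k - int n)) (\<lambda>n. es (k - 1 - int n))"
          using isray_mono[OF dr_tail_bwd[OF dr(1,2,3) all]] dr(3) by blast
        have "has_ray_in V E ends A \<and> has_ray_in V E ends B"
        proof (cases "vs k \<in> A")
          case True
          then have "vs (k+1) \<notin> A" using kk by auto
          then have s1: "{z. (z \<in> A) = (vs (k+1) \<in> A)} \<inter> V \<subseteq> B \<inter> V"
            and s2: "{z. (z \<in> A) = (vs k \<in> A)} \<inter> V \<subseteq> A \<inter> V" using True AB by auto
          show ?thesis unfolding has_ray_iff
            using isray_mono[OF bw order.refl s2] isray_mono[OF fw order.refl s1] by blast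
        next
          case False
          then have "vs (k+1) \<in> A" using kk by auto
          then have s1: "{z. (z \<in> A) = (vs (k+1) \<in> A)} \<inter> V \<subseteq> A \<inter> V"
            and s2: "{z. (z \<in> A) = (vs k \<in> A)} \<inter> V \<subseteq> B \<inter> V" using False AB by auto
          show ?thesis unfolding has_ray_iff
            using isray_mono[OF bw order.refl s2] isray_mono[OF fw order.refl s1] by blast
        qed
        then show False using sm unfolding small_side_def by blast
      qed
    qed
  qed
qed

end



context GM
begin

definition adj :: "'e set \<Rightarrow> 'v \<Rightarrow> 'v \<Rightarrow> bool" where
  "adj S a b \<longleftrightarrow> (\<exists>g\<in>S. ends g = {a, b})"

abbreviation reach :: "'e set \<Rightarrow> 'v \<Rightarrow> 'v \<Rightarrow> bool" where
  "reach S \<equiv> (adj S)\<^sup>*\<^sup>*"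

definition walk :: "'e set \<Rightarrow> nat \<Rightarrow> (nat \<Rightarrow> 'v) \<Rightarrow> (nat \<Rightarrow> 'e) \<Rightarrow> bool" where
  "walk S m p q \<longleftrightarrow> (\<forall>i<m. q i \<in> S \<and> ends (q i) = {p i, p (Suc i)})"

lemma adj_sym: "adj S a b \<Longrightarrow> adj S b a"
  unfolding adj_def by (auto simp: insert_commute)

lemma reach_sym: "reach S x y \<Longrightarrow> reach S y x"
proof (induction rule: rtranclp_induct)
  case base then show ?case by simp
next
  case (step y z)
  then show ?case using adj_sym converse_rtranclp_into_rtranclp by metis
qed

lemma reach_mono: "reach S x y \<Longrightarrow> S \<subseteq> S' \<Longrightarrow> reach S' x y"
proof (induction rule: rtranclp_induct)
  case base then show ?case by simp
next
  case (step y z)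
  then have "adj S' y z" unfolding adj_def by blast
  then show ?case using step rtranclp.rtrancl_into_rtrancl by metis
qed

lemma walk_of_reach: "reach S x y \<Longrightarrow> \<exists>m p q. walk S m p q \<and> p 0 = x \<and> p m = y"
proof (induction rule: rtranclp_induct)
  case base
  have "walk S 0 (\<lambda>_. x) (\<lambda>_. undefined)" unfolding walk_def by simp
  then show ?case by blast
next
  case (step y z)
  obtain m p q where W: "walk S m p q" "p 0 = x" "p m = y" using step by blast
  obtain g where g: "g \<in> S" "ends g = {y, z}" using step(2) unfolding adj_def by blast
  define p' where "p' = p(Suc m := z)"
  define q' where "q' = q(m := g)"
  have "walk S (Suc m) p' q'" unfolding walk_def
  proof (intro allI impI)
    fix i assume i: "i < Suc m"
    show "q' i \<in> S \<and> ends (q' i) = {p' i, p' (Suc i)}"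
    proof (cases "i = m")
      case True then show ?thesis using g W unfolding p'_def q'_def by auto
    next
      case False then show ?thesis using W(1) i unfolding walk_def p'_def q'_def by auto
    qed
  qed
  moreover have "p' 0 = x" "p' (Suc m) = z" using W unfolding p'_def by auto
  ultimately show ?case by blast
qed

lemma reach_of_walk: "walk S m p q \<Longrightarrow> reach S (p 0) (p m)"
proof (induction m)
  case 0 then show ?case by simp
next
  case (Suc m)
  then have "walk S m p q" unfolding walk_def by auto
  then have "reach S (p 0) (p m)" using Suc by blast
  moreover have "adj S (p m) (p (Suc m))" using Suc.prems unfolding walk_def adj_def by blast
  ultimately show ?case using rtranclp.rtrancl_into_rtrancl by metis
qed

lemma min_walk:
  assumes "walk S m p q" "p 0 = x" "p m \<in> T"
  shows "\<exists>m p q. walk S m p q \<and> p 0 = x \<and> p m \<in> T \<and> inj_on p {..m} \<and> (\<forall>i<m. p i \<notin> T)"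
proof -
  define P where "P m \<longleftrightarrow> (\<exists>p q. walk S m p q \<and> p 0 = x \<and> p m \<in> T)" for m
  have "P m" using assms unfolding P_def by blast
  define m0 where "m0 = (LEAST m. P m)"
  have Pm0: "P m0" unfolding m0_def by (rule LeastI) (fact)
  have lt: "k < m0 \<Longrightarrow> \<not> P k" for k unfolding m0_def by (rule not_less_Least)
  obtain p q where pq: "walk S m0 p q" "p 0 = x" "p m0 \<in> T" using Pm0 unfolding P_def by blast
  have notT: "\<forall>i<m0. p i \<notin> T"
  proof (intro allI impI notI)
    fix i assume i: "i < m0" "p i \<in> T"
    have "walk S i p q" using pq(1) i unfolding walk_def by auto
    then have "P i" using pq(2) i unfolding P_def by blast
    then show False using lt i by blast
  qed
  have inj: "inj_on p {..m0}"
  proof (rule ccontr)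
    assume "\<not> inj_on p {..m0}"
    then obtain i j where ij: "i < j" "j \<le> m0" "p i = p j"
      unfolding inj_on_def by (metis atMost_iff linorder_neqE_nat)
    define d where "d = j - i"
    have jd: "j = i + d" using ij unfolding d_def by auto
    define p' where "p' k = (if k \<le> i then p k else p (k + d))" for k
    define q' where "q' k = (if k < i then q k else q (k + d))" for k
    have pge: "k \<ge> i \<Longrightarrow> p' k = p (k + d)" for k using ij jd unfolding p'_def by auto
    have "walk S (m0 - d) p' q'"
      unfolding walk_def
    proof (intro allI impI)
      fix k assume k: "k < m0 - d"
      show "q' k \<in> S \<and> ends (q' k) = {p' k, p' (Suc k)}"
      proof (cases "k < i")
        case True
        then have "Suc k \<le> i" by simp
        then show ?thesis using pq(1) ij k True unfolding walk_def p'_def q'_def by auto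
      next
        case False
        have "k + d < m0" using k ij jd by auto
        then have "q (k+d) \<in> S \<and> ends (q (k+d)) = {p (k+d), p (Suc (k+d))}" using pq(1) unfolding walk_def by blast
        moreover have "p' k = p (k + d)" using False pge by auto
        moreover have "p' (Suc k) = p (Suc k + d)" using False pge by auto
        ultimately show ?thesis using False unfolding q'_def by auto
      qed
    qed
    moreover have "p' 0 = x" using pq(2) unfolding p'_def by auto
    moreover have "p' (m0 - d) \<in> T"
    proof -
      have "m0 - d \<ge> i" using ij jd by auto
      then have "p' (m0 - d) = p (m0 - d + d)" using pge by blast
      also have "m0 - d + d = m0" using ij jd by auto
      finally show ?thesis using pq(3) by simp
    qed
    ultimately have "P (m0 - d)" unfolding P_def by blast
    moreover have "m0 - d < m0" using ij jd by auto
    ultimately show False using lt by blast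
  qed
  show ?thesis using pq notT inj by blast
qed

lemma walk_inj_edges:
  assumes W: "walk S m p q" and inj: "inj_on p {..m}"
  shows "inj_on q {..<m}"
proof (rule inj_onI)
  fix a b assume ab: "a \<in> {..<m}" "b \<in> {..<m}" "q a = q b"
  have "{p a, p (Suc a)} = {p b, p (Suc b)}" using W ab unfolding walk_def by (metis lessThan_iff)
  then have "(p a = p b \<and> p (Suc a) = p (Suc b)) \<or> (p a = p (Suc b) \<and> p (Suc a) = p b)"
    by (simp add: doubleton_eq_iff)
  moreover have "p a = p b \<Longrightarrow> a = b" using inj ab unfolding inj_on_def by auto
  moreover have "p a = p (Suc b) \<Longrightarrow> a = Suc b" using inj ab unfolding inj_on_def by auto
  moreover have "p (Suc a) = p b \<Longrightarrow> Suc a = b" using inj ab unfolding inj_on_def by auto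
  ultimately show "a = b" by auto
qed

lemma ray_reach: "isray S A w r \<Longrightarrow> reach S (w 0) (w n)"
proof (induction n)
  case 0 then show ?case by simp
next
  case (Suc n)
  then have "adj S (w n) (w (Suc n))" unfolding isray_def adj_def by blast
  then show ?case using Suc rtranclp.rtrancl_into_rtrancl by metis
qed

lemma ray_from:
  assumes R: "isray S A w r" and rc: "reach S x (w j)"
  shows "\<exists>w' r'. isray S UNIV w' r' \<and> w' 0 = x"
proof -
  obtain m0 p0 q0 where W0: "walk S m0 p0 q0" "p0 0 = x" "p0 m0 = w j" using walk_of_reach[OF rc] by blast
  have rw: "p0 m0 \<in> range w" using W0(3) by simp
  then obtain m p q where W: "walk S m p q" "p 0 = x" "p m \<in> range w" "inj_on p {..m}" "\<forall>i<m. p i \<notin> range w"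
    using min_walk[OF W0(1,2) rw] by blast
  obtain j' where j': "p m = w j'" using W(3) by blast
  define w' where "w' n = (if n \<le> m then p n else w (j' + (n - m)))" for n
  define r' where "r' n = (if n < m then q n else r (j' + (n - m)))" for n
  have Rr: "inj w" "inj r" "\<And>i. r i \<in> S" "\<And>i. ends (r i) = {w i, w (Suc i)}" using R unfolding isray_def by auto
  have qinj: "inj_on q {..<m}" using walk_inj_edges W(1,4) by blast
  have wge: "n \<ge> m \<Longrightarrow> w' n = w (j' + (n - m))" for n using j' unfolding w'_def by auto
  have wle: "n \<le> m \<Longrightarrow> w' n = p n" for n unfolding w'_def by auto
  have ed: "r' n \<in> S \<and> ends (r' n) = {w' n, w' (Suc n)}" for n
  proof (cases "n < m")
    case True
    then show ?thesis using W(1) wle[of n] wle[of "Suc n"] unfolding walk_def r'_def by auto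
  next
    case False
    then have "Suc (j' + (n - m)) = j' + (Suc n - m)" by auto
    then show ?thesis using Rr(3,4) wge[of n] wge[of "Suc n"] False unfolding r'_def by auto
  qed
  have iw: "inj w'"
  proof (rule injI)
    fix a b assume ab: "w' a = w' b"
    show "a = b"
    proof (cases "a \<le> m"; cases "b \<le> m")
      assume "a \<le> m" "b \<le> m"
      then show ?thesis using W(4) ab wle unfolding inj_on_def by auto
    next
      assume a: "a \<le> m" and b: "\<not> b \<le> m"
      show ?thesis
      proof (cases "a < m")
        case True
        then show ?thesis using W(5) ab wle[OF a] wge[of b] b by auto
      next
        case False
        then have "a = m" using a by auto
        then have "w j' = w (j' + (b - m))" using ab wle[OF a] wge[of b] b j' by auto
        then have "j' = j' + (b - m)" using Rr(1) unfolding inj_def by blast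
        then show ?thesis using b by auto
      qed
    next
      assume a: "\<not> a \<le> m" and b: "b \<le> m"
      show ?thesis
      proof (cases "b < m")
        case True
        then show ?thesis using W(5) ab wle[OF b] wge[of a] a by (metis nat_le_linear rangeI)
      next
        case False
        then have "b = m" using b by auto
        then have "w j' = w (j' + (a - m))" using ab wle[OF b] wge[of a] a j' by auto
        then have "j' = j' + (a - m)" using Rr(1) unfolding inj_def by blast
        then show ?thesis using a by auto
      qed
    next
      assume a: "\<not> a \<le> m" and b: "\<not> b \<le> m"
      then have "j' + (a - m) = j' + (b - m)" using ab wge[of a] wge[of b] Rr(1) unfolding inj_def by auto
      then show ?thesis using a b by auto
    qed
  qed
  have ir: "inj r'"
  proof (rule injI)
    fix a b assume ab: "r' a = r' b"
    have cross: False if a: "a < m" and b: "\<not> b < m" and e: "q a = r (j' + (b - m))" for a b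
    proof -
      have "ends (q a) = {p a, p (Suc a)}" using W(1) a unfolding walk_def by auto
      then have "p a \<in> ends (r (j' + (b - m)))" using e by auto
      then have "p a \<in> {w (j' + (b - m)), w (Suc (j' + (b - m)))}" using Rr(4) by simp
      then have "p a \<in> range w" by auto
      then show False using W(5) a by auto
    qed
    show "a = b"
    proof (cases "a < m"; cases "b < m")
      assume "a < m" "b < m"
      then show ?thesis using qinj ab unfolding inj_on_def r'_def by auto
    next
      assume "a < m" "\<not> b < m"
      then show ?thesis using cross ab unfolding r'_def by auto
    next
      assume "\<not> a < m" "b < m"
      then show ?thesis using cross ab unfolding r'_def by (metis)
    next
      assume a: "\<not> a < m" and b: "\<not> b < m"
      then have "j' + (a - m) = j' + (b - m)" using ab Rr(2) unfolding inj_def r'_def by auto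
      then show ?thesis using a b by auto
    qed
  qed
  have "isray S UNIV w' r'" unfolding isray_def using iw ir ed by auto
  moreover have "w' 0 = x" using W(2) unfolding w'_def by auto
  ultimately show ?thesis by blast
qed

end



context GM
begin

lemma ray_ends: "isray S A w r \<Longrightarrow> S \<subseteq> E \<Longrightarrow> w n \<in> V"
  unfolding isray_def using ends_sub by blast

lemma fc_from_path:
  assumes f: "f \<in> E" "ends f = {x, y}" "x \<noteq> y" and r: "reach S y x" and S: "S \<subseteq> E" "f \<notin> S"
  shows "\<exists>C. finite_cycle_edges V E ends C \<and> f \<in> C \<and> C \<subseteq> insert f S"
proof -
  obtain m0 p0 q0 where W0: "walk S m0 p0 q0" "p0 0 = y" "p0 m0 = x" using walk_of_reach[OF r] by blast
  have "p0 m0 \<in> {x}" using W0 by simp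
  then obtain m p q where W: "walk S m p q" "p 0 = y" "p m \<in> {x}" "inj_on p {..m}"
    using min_walk[OF W0(1,2)] by blast
  have pm: "p m = x" using W(3) by simp
  have m1: "m \<ge> 1" using pm W(2) f(3) by (cases m) auto
  have qinj: "inj_on q {..<m}" using walk_inj_edges W(1,4) by blast
  define es where "es i = (if i < m then q i else f)" for i
  have ed: "\<forall>i<Suc m. p i \<in> V \<and> es i \<in> E \<and> ends (es i) = {p i, p (Suc i mod Suc m)}"
  proof (intro allI impI)
    fix i assume i: "i < Suc m"
    show "p i \<in> V \<and> es i \<in> E \<and> ends (es i) = {p i, p (Suc i mod Suc m)}"
    proof (cases "i < m")
      case True
      then have "q i \<in> S" "ends (q i) = {p i, p (Suc i)}" using W(1) unfolding walk_def by auto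
      then show ?thesis using True S(1) ends_sub[of "q i"] unfolding es_def by auto
    next
      case False
      then have "i = m" using i by auto
      then show ?thesis using f pm W(2) ends_sub[of f] unfolding es_def by (auto simp: insert_commute)
    qed
  qed
  have vinj: "inj_on p {..<Suc m}" using W(4) by (simp add: lessThan_Suc_atMost)
  have einj: "inj_on es {..<Suc m}"
  proof (rule inj_onI)
    fix a b assume ab: "a \<in> {..<Suc m}" "b \<in> {..<Suc m}" "es a = es b"
    have qS: "i < m \<Longrightarrow> q i \<in> S" for i using W(1) unfolding walk_def by auto
    show "a = b"
    proof (cases "a < m"; cases "b < m")
      assume "a < m" "b < m" then show ?thesis using qinj ab unfolding es_def inj_on_def by auto
    next
      assume "a < m" "\<not> b < m" then show ?thesis using ab qS S(2) unfolding es_def by fastforce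
    next
      assume "\<not> a < m" "b < m" then show ?thesis using ab qS S(2) unfolding es_def by fastforce
    next
      assume "\<not> a < m" "\<not> b < m" then show ?thesis using ab by auto
    qed
  qed
  have fcyc: "finite_cycle_edges V E ends (es ` {..<Suc m})"
    unfolding finite_cycle_edges_def
    apply (rule exI[of _ "Suc m"], rule exI[of _ p], rule exI[of _ es])
    using vinj einj ed by simp
  have "f \<in> es ` {..<Suc m}" unfolding es_def by (rule image_eqI[of _ _ m]) auto
  moreover have "es ` {..<Suc m} \<subseteq> insert f S" using W(1) unfolding es_def walk_def by auto
  ultimately show ?thesis using fcyc by blast
qed

lemma loop_cycle:
  assumes "f \<in> E" "ends f = {x, x}"
  shows "finite_cycle_edges V E ends {f}"
proof -
  have "x \<in> V" using assms ends_sub by auto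
  then have "inj_on (\<lambda>_::nat. x) {..<1} \<and> inj_on (\<lambda>_::nat. f) {..<1} \<and>
      (\<forall>i<1. (\<lambda>_. x) i \<in> V \<and> (\<lambda>_. f) i \<in> E \<and> ends ((\<lambda>_. f) i) = {(\<lambda>_. x) i, (\<lambda>_. x) (Suc i mod 1)}) \<and>
      {f} = (\<lambda>_. f) ` {..<(1::nat)}" using assms by (auto simp: inj_on_def)
  then show ?thesis unfolding finite_cycle_edges_def by (intro exI[of _ "1::nat"]) blast
qed

lemma dr_from_rays:
  assumes f: "f \<in> E" "ends f = {x, y}" and S: "S \<subseteq> E" "f \<notin> S"
    and Rx: "isray S UNIV wx rx" "wx 0 = x" and Ry: "isray S UNIV wy ry" "wy 0 = y"
    and disj: "\<And>a b. wx a \<noteq> wy b"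
  shows "\<exists>C. double_ray_edges V E ends C \<and> f \<in> C \<and> C \<subseteq> insert f S"
proof -
  have X: "inj wx" "inj rx" "\<And>i. rx i \<in> S" "\<And>i. ends (rx i) = {wx i, wx (Suc i)}" using Rx unfolding isray_def by auto
  have Y: "inj wy" "inj ry" "\<And>i. ry i \<in> S" "\<And>i. ends (ry i) = {wy i, wy (Suc i)}" using Ry unfolding isray_def by auto
  define vs :: "int \<Rightarrow> 'v" where "vs i = (if i \<le> 0 then wx (nat (- i)) else wy (nat (i - 1)))" for i
  define es :: "int \<Rightarrow> 'e" where "es i = (if i < 0 then rx (nat (- i - 1)) else if i = 0 then f else ry (nat (i - 1)))" for i
  have ed: "es i \<in> E \<and> ends (es i) = {vs i, vs (i + 1)}" for i
  proof -
    consider "i < 0" | "i = 0" | "i > 0" by linarith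
    then show ?thesis
    proof cases
      case 1
      then have "nat (- i) = Suc (nat (- i - 1))" "nat (- (i + 1)) = nat (- i - 1)" by auto
      then show ?thesis using 1 X(3,4)[of "nat (- i - 1)"] S(1) unfolding es_def vs_def by (auto simp: insert_commute)
    next
      case 2 then show ?thesis using f Rx(2) Ry(2) unfolding es_def vs_def by auto
    next
      case 3
      then have "nat (i + 1 - 1) = Suc (nat (i - 1))" by auto
      then show ?thesis using 3 Y(3,4)[of "nat (i - 1)"] S(1) unfolding es_def vs_def by auto
    qed
  qed
  have vV: "vs i \<in> V" for i using ed[of i] ends_sub by auto
  have xcross: "rx a \<noteq> ry b" for a b
  proof
    assume "rx a = ry b"
    then have "wx a \<in> {wy b, wy (Suc b)}" using X(4)[of a] Y(4)[of b] by auto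
    then show False using disj by auto
  qed
  have rxf: "rx a \<noteq> f" "ry a \<noteq> f" for a using X(3) Y(3) S(2) by auto
  have iv: "inj vs"
  proof (rule injI)
    fix a b assume ab: "vs a = vs b"
    show "a = b"
    proof (cases "a \<le> 0"; cases "b \<le> 0")
      assume h: "a \<le> 0" "b \<le> 0"
      then have "wx (nat (- a)) = wx (nat (- b))" using ab unfolding vs_def by auto
      then have "nat (- a) = nat (- b)" by (rule injD[OF X(1)])
      then show ?thesis using h by simp
    next
      assume "a \<le> 0" "\<not> b \<le> 0" then show ?thesis using ab disj unfolding vs_def by auto
    next
      assume "\<not> a \<le> 0" "b \<le> 0" then show ?thesis using ab disj unfolding vs_def by (metis)
    next
      assume h: "\<not> a \<le> 0" "\<not> b \<le> 0"
      then have "wy (nat (a - 1)) = wy (nat (b - 1))" using ab unfolding vs_def by auto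
      then have "nat (a - 1) = nat (b - 1)" by (rule injD[OF Y(1)])
      then show ?thesis using h by simp
    qed
  qed
  have ie: "inj es"
  proof (rule injI)
    fix a b assume ab: "es a = es b"
    consider "a < 0" | "a = 0" | "a > 0" by linarith
    then show "a = b"
    proof cases
      case 1
      consider "b < 0" | "b = 0" | "b > 0" by linarith
      then show ?thesis
      proof cases
        case bneg: 1
        then have "rx (nat (- a - 1)) = rx (nat (- b - 1))" using 1 ab unfolding es_def by auto
        then have "nat (- a - 1) = nat (- b - 1)" by (rule injD[OF X(2)])
        then show ?thesis using 1 bneg by simp
      qed (use 1 ab xcross rxf in \<open>auto simp: es_def\<close>)
    next
      case 2
      then show ?thesis using ab rxf unfolding es_def by (auto split: if_splits)
    next
      case 3
      consider "b < 0" | "b = 0" | "b > 0" by linarith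
      then show ?thesis
      proof cases
        case bpos: 3
        then have "ry (nat (a - 1)) = ry (nat (b - 1))" using 3 ab unfolding es_def by auto
        then have "nat (a - 1) = nat (b - 1)" by (rule injD[OF Y(2)])
        then show ?thesis using 3 bpos by simp
      qed (use 3 ab xcross rxf in \<open>auto simp: es_def dest: sym\<close>)
    qed
  qed
  have dr: "double_ray_edges V E ends (range es)"
    unfolding double_ray_edges_def using iv ie ed vV by blast
  have "f \<in> range es" using rangeI[of es 0] unfolding es_def by simp
  moreover have "range es \<subseteq> insert f S" using X(3) Y(3) unfolding es_def by auto
  ultimately show ?thesis using dr by blast
qed

end



context GM
begin

lemma reach_trans: "reach S a b \<Longrightarrow> reach S b c \<Longrightarrow> reach S a c"
  by (rule rtranclp_trans)

lemma cycle_conn: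
  assumes C: "C \<in> elementary_algebraic_cycles V E ends" and CS: "C \<subseteq> S"
  shows "\<exists>v0. \<forall>g\<in>C. \<forall>a\<in>ends g. reach S v0 a"
proof -
  have "finite_cycle_edges V E ends C \<or> double_ray_edges V E ends C"
    using C unfolding elementary_algebraic_cycles_def by simp
  then show ?thesis
  proof
    assume "finite_cycle_edges V E ends C"
    then obtain n vs es where cyc: "n \<ge> 1" "inj_on vs {..<n}" "inj_on es {..<n}"
      "\<forall>i<n. vs i \<in> V \<and> es i \<in> E \<and> ends (es i) = {vs i, vs (Suc i mod n)}" "C = es ` {..<n}"
      unfolding finite_cycle_edges_def by blast
    have r: "i < n \<Longrightarrow> reach S (vs 0) (vs i)" for i
    proof (induction i)
      case 0 then show ?case by simp
    next
      case (Suc i)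
      then have "es i \<in> S" "ends (es i) = {vs i, vs (Suc i)}" using cyc CS by auto
      then have "adj S (vs i) (vs (Suc i))" unfolding adj_def by blast
      then show ?case using Suc rtranclp.rtrancl_into_rtrancl by (metis Suc_lessD)
    qed
    show ?thesis
    proof (intro exI ballI)
      fix g a assume g: "g \<in> C" and a: "a \<in> ends g"
      then obtain i where i: "i < n" "g = es i" using cyc(5) by auto
      then have "a = vs i \<or> a = vs (Suc i mod n)" using a cyc(4) by auto
      moreover have "Suc i mod n < n" using i by auto
      ultimately show "reach S (vs 0) a" using r i by auto
    qed
  next
    assume "double_ray_edges V E ends C"
    then obtain vs :: "int \<Rightarrow> 'v" and es :: "int \<Rightarrow> 'e" where dr: "inj vs" "inj es"
      "\<forall>i. vs i \<in> V \<and> es i \<in> E \<and> ends (es i) = {vs i, vs (i + 1)}" "C = range es"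
      unfolding double_ray_edges_def by blast
    have adj: "adj S (vs i) (vs (i + 1))" for i using dr CS unfolding adj_def by blast
    have r1: "reach S (vs 0) (vs (int t))" for t
    proof (induction t)
      case 0 then show ?case by simp
    next
      case (Suc t)
      then show ?case using adj[of "int t"] rtranclp.rtrancl_into_rtrancl by (metis add.commute of_nat_Suc)
    qed
    have r2: "reach S (vs 0) (vs (- int t))" for t
    proof (induction t)
      case 0 then show ?case by simp
    next
      case (Suc t)
      have "adj S (vs (- int (Suc t))) (vs (- int t))" using adj[of "- int (Suc t)"] by simp
      then have "adj S (vs (- int t)) (vs (- int (Suc t)))" using adj_sym by blast
      then show ?case using Suc rtranclp.rtrancl_into_rtrancl by metis
    qed
    have r: "reach S (vs 0) (vs i)" for i
    proof (cases "i \<ge> 0")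
      case True then show ?thesis using r1[of "nat i"] by simp
    next
      case False then show ?thesis using r2[of "nat (- i)"] by simp
    qed
    show ?thesis
    proof (intro exI ballI)
      fix g a assume g: "g \<in> C" and a: "a \<in> ends g"
      then obtain i where i: "g = es i" using dr(4) by auto
      then have "a = vs i \<or> a = vs (i + 1)" using a dr(3) by auto
      then show "reach S (vs 0) a" using r by auto
    qed
  qed
qed

lemma cycle_cross_ray:
  fixes P :: "'v \<Rightarrow> bool"
  assumes C: "C \<in> elementary_algebraic_cycles V E ends" and g: "g \<in> C"
    and oth: "\<And>e a b. e \<in> C \<Longrightarrow> e \<noteq> g \<Longrightarrow> ends e = {a, b} \<Longrightarrow> P a = P b"
    and gend: "ends g = {a0, b0}" "P a0" "\<not> P b0"
  shows "\<exists>w r. isray (C - {g}) ({z. P z} \<inter> V) w r"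
proof -
  have gd: "ends g = {a, b} \<Longrightarrow> P a \<noteq> P b" for a b
    using gend by (auto simp: doubleton_eq_iff)
  have "finite_cycle_edges V E ends C \<or> double_ray_edges V E ends C"
    using C unfolding elementary_algebraic_cycles_def by simp
  then show ?thesis
  proof
    assume "finite_cycle_edges V E ends C"
    then obtain n vs es where cyc: "n \<ge> 1" "inj_on vs {..<n}" "inj_on es {..<n}"
      "\<forall>i<n. vs i \<in> V \<and> es i \<in> E \<and> ends (es i) = {vs i, vs (Suc i mod n)}" "C = es ` {..<n}"
      unfolding finite_cycle_edges_def by blast
    obtain k where k: "k < n" "es k = g" using g cyc(5) by blast
    have all: "\<forall>i<n. i \<noteq> k \<longrightarrow> P (vs i) = P (vs (Suc i mod n))"
    proof (intro allI impI)
      fix i assume i: "i < n" "i \<noteq> k"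
      have "es i \<noteq> g" using cyc(3) i k unfolding inj_on_def by auto
      then show "P (vs i) = P (vs (Suc i mod n))" using oth[of "es i"] cyc(4,5) i by auto
    qed
    have kk: "P (vs k) \<noteq> P (vs (Suc k mod n))" using gd cyc(4) k by auto
    show ?thesis using fc_cross[OF k(1) all kk] by blast
  next
    assume "double_ray_edges V E ends C"
    then obtain vs :: "int \<Rightarrow> 'v" and es :: "int \<Rightarrow> 'e" where dr: "inj vs" "inj es"
      "\<forall>i. vs i \<in> V \<and> es i \<in> E \<and> ends (es i) = {vs i, vs (i + 1)}" "C = range es"
      unfolding double_ray_edges_def by blast
    obtain k where k: "es k = g" using g dr(4) by blast
    have all: "\<forall>i. i \<noteq> k \<longrightarrow> P (vs i) = P (vs (i + 1))"
    proof (intro allI impI)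
      fix i assume i: "i \<noteq> k"
      have "es i \<noteq> g" using dr(2) i k unfolding inj_def by auto
      then show "P (vs i) = P (vs (i + 1))" using oth[of "es i"] dr(3,4) by auto
    qed
    have kk: "P (vs k) \<noteq> P (vs (k + 1))" using gd dr(3) k by auto
    have fw: "isray (C - {g}) ({z. P z = P (vs (k+1))} \<inter> V) (\<lambda>n. vs (k + 1 + int n)) (\<lambda>n. es (k + 1 + int n))"
      using dr_tail_fwd[OF dr(1,2,3) all] dr(4) k by simp
    have bw: "isray (C - {g}) ({z. P z = P (vs k)} \<inter> V) (\<lambda>n. vs (k - int n)) (\<lambda>n. es (k - 1 - int n))"
      using dr_tail_bwd[OF dr(1,2,3) all] dr(4) k by simp
    show ?thesis
    proof (cases "P (vs k)")
      case True
      then have "{z. P z = P (vs k)} \<inter> V = {z. P z} \<inter> V" by auto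
      then show ?thesis using bw by auto
    next
      case False
      then have "{z. P z = P (vs (k+1))} \<inter> V = {z. P z} \<inter> V" using kk by auto
      then show ?thesis using fw by auto
    qed
  qed
qed

lemma ray_no_cycle:
  assumes R: "isray S A w r" and C: "C \<in> elementary_algebraic_cycles V E ends" and CR: "C \<subseteq> range r"
  shows False
proof -
  have Rr: "inj w" "inj r" "\<And>i. ends (r i) = {w i, w (Suc i)}" using R unfolding isray_def by auto
  have two: "\<And>t. w t \<noteq> w (Suc t)" using Rr(1) unfolding inj_def by (metis n_not_Suc_n)
  have "finite_cycle_edges V E ends C \<or> double_ray_edges V E ends C"
    using C unfolding elementary_algebraic_cycles_def by simp
  then show ?thesis
  proof
    assume "finite_cycle_edges V E ends C"
    then obtain n vs es where cyc: "n \<ge> 1" "inj_on vs {..<n}" "inj_on es {..<n}"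
      "\<forall>i<n. vs i \<in> V \<and> es i \<in> E \<and> ends (es i) = {vs i, vs (Suc i mod n)}" "C = es ` {..<n}"
      unfolding finite_cycle_edges_def by blast
    define N where "N = r -` C"
    have fN: "finite N" unfolding N_def using cyc(5) Rr(2) by (simp add: finite_vimageI)
    have "es 0 \<in> C" using cyc(1,5) by auto
    then obtain t0 where "r t0 = es 0" using CR by force
    then have neN: "N \<noteq> {}" unfolding N_def using \<open>es 0 \<in> C\<close> by auto
    define M where "M = Max N"
    have MN: "M \<in> N" unfolding M_def using fN neN by simp
    have Mmax: "t \<in> N \<Longrightarrow> t \<le> M" for t unfolding M_def using fN by simp
    have only: "e \<in> C \<Longrightarrow> w (Suc M) \<in> ends e \<Longrightarrow> e = r M" for e
    proof -
      assume e: "e \<in> C" "w (Suc M) \<in> ends e"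
      then obtain t where t: "e = r t" using CR by blast
      then have "t \<in> N" using e unfolding N_def by auto
      then have tM: "t \<le> M" using Mmax by auto
      have "w (Suc M) = w t \<or> w (Suc M) = w (Suc t)" using e t Rr(3) by auto
      then have "Suc M = t \<or> Suc M = Suc t" using Rr(1) unfolding inj_def by blast
      then show "e = r M" using tM t by auto
    qed
    obtain i where i: "i < n" "es i = r M" using MN cyc(5) unfolding N_def by auto
    have n1: "n = 1"
    proof -
      have "w (Suc M) \<in> ends (es i)" using i Rr(3) by auto
      then have "w (Suc M) = vs i \<or> w (Suc M) = vs (Suc i mod n)" using cyc(4) i by auto
      then show ?thesis
      proof
        assume h: "w (Suc M) = vs (Suc i mod n)"
        define j where "j = Suc i mod n"
        have j: "j < n" using i unfolding j_def by auto
        have "es j \<in> C" using j cyc(5) by auto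
        moreover have "w (Suc M) \<in> ends (es j)" using h cyc(4) j unfolding j_def by auto
        ultimately have "es j = es i" using only i by auto
        then have "j = i" using cyc(3) i j unfolding inj_on_def by auto
        then have si: "Suc i mod n = i" unfolding j_def .
        show "n = 1"
        proof (cases "Suc i < n")
          case True then show ?thesis using si by simp
        next
          case False
          then have "Suc i = n" using i by simp
          then show ?thesis using si by auto
        qed
      next
        assume h: "w (Suc M) = vs i"
        define j where "j = (if i = 0 then n - 1 else i - 1)"
        have j: "j < n" using i cyc(1) unfolding j_def by auto
        have sj: "Suc j mod n = i" using i cyc(1) unfolding j_def by auto
        have "es j \<in> C" using j cyc(5) by auto
        moreover have "w (Suc M) \<in> ends (es j)" using h cyc(4) j sj by auto
        ultimately have "es j = es i" using only i by auto
        then have "j = i" using cyc(3) i j unfolding inj_on_def by auto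
        then show "n = 1" using i unfolding j_def by (auto split: if_splits)
      qed
    qed
    then have "ends (es 0) = {vs 0}" using cyc(4) by auto
    moreover have "ends (es 0) = {w M, w (Suc M)}" using i n1 Rr(3) by auto
    ultimately show False using two[of M] by (auto simp: doubleton_eq_iff)
  next
    assume "double_ray_edges V E ends C"
    then obtain vs :: "int \<Rightarrow> 'v" and es :: "int \<Rightarrow> 'e" where dr: "inj vs" "inj es"
      "\<forall>i. vs i \<in> V \<and> es i \<in> E \<and> ends (es i) = {vs i, vs (i + 1)}" "C = range es"
      unfolding double_ray_edges_def by blast
    define N where "N = r -` C"
    have "es 0 \<in> range r" using CR dr(4) by auto
    then obtain t0 where "es 0 = r t0" by (rule rangeE)
    then have neN: "t0 \<in> N" unfolding N_def using dr(4) by (metis rangeI vimage_eq)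
    define M where "M = (LEAST t. t \<in> N)"
    have MN: "M \<in> N" unfolding M_def using neN by (rule LeastI)
    have Mmin: "t \<in> N \<Longrightarrow> M \<le> t" for t unfolding M_def by (rule Least_le)
    have only: "e \<in> C \<Longrightarrow> w M \<in> ends e \<Longrightarrow> e = r M" for e
    proof -
      assume e: "e \<in> C" "w M \<in> ends e"
      then obtain t where t: "e = r t" using CR by blast
      then have "t \<in> N" using e unfolding N_def by auto
      then have tM: "M \<le> t" using Mmin by auto
      have "w M = w t \<or> w M = w (Suc t)" using e t Rr(3) by auto
      then have "M = t \<or> M = Suc t" using Rr(1) unfolding inj_def by blast
      then show "e = r M" using tM t by auto
    qed
    obtain a where a: "es a = r M" using MN dr(4) unfolding N_def by auto
    have "w M \<in> ends (es a)" using a Rr(3) by auto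
    then obtain b where b: "w M = vs b" using dr(3) by auto
    have "w M \<in> ends (es b)" using b dr(3) by auto
    then have e1: "es b = r M" using only dr(4) by auto
    have "w M \<in> ends (es (b - 1))" using b dr(3)[rule_format, of "b - 1"] by auto
    then have e2: "es (b - 1) = r M" using only dr(4) by auto
    have "b = b - 1" using e1 e2 dr(2) unfolding inj_def by metis
    then show False by simp
  qed
qed

end



context GM
begin

lemma cross_index:
  fixes P :: "'v \<Rightarrow> bool"
  shows "P (p 0) \<Longrightarrow> \<not> P (p m) \<Longrightarrow> \<exists>i<m. P (p i) \<and> \<not> P (p (Suc i))"
proof (induction m)
  case 0 then show ?case by simp
next
  case (Suc m)
  show ?case
  proof (cases "P (p m)")
    case True then show ?thesis using Suc.prems by auto
  next
    case False then show ?thesis using Suc by (meson less_Suc_eq)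
  qed
qed

lemma cocirc_edge:
  assumes D: "D \<in> cocircuits E I" and f: "f \<in> D"
  shows "\<exists>x y. ends f = {x, y} \<and> x \<noteq> y \<and> \<not> reach (E - D) x y"
proof -
  have DE: "D \<subseteq> E" using D cocirc_iff by auto
  then have fE: "f \<in> E" using f by auto
  obtain a b where ab: "ends f = {a, b}" using ends_cases[OF fE] by blast
  have anb: "a \<noteq> b"
  proof
    assume "a = b"
    then have "finite_cycle_edges V E ends {f}" using loop_cycle[OF fE] ab by simp
    then have "{f} \<in> circuits E I" using circ unfolding elementary_algebraic_cycles_def by simp
    moreover have "{f} \<inter> D = {f}" using f by auto
    ultimately show False using orth[OF D] by blast
  qed
  have nr: "\<not> reach (E - D) a b"
  proof
    assume "reach (E - D) a b"
    then have "reach (E - D) b a" by (rule reach_sym)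
    then obtain C where C: "finite_cycle_edges V E ends C" "f \<in> C" "C \<subseteq> insert f (E - D)"
      using fc_from_path[OF fE ab anb _ _] f by blast
    then have "C \<in> circuits E I" using circ unfolding elementary_algebraic_cycles_def by simp
    moreover have "C \<inter> D = {f}" using C f by auto
    ultimately show False using orth[OF D] by blast
  qed
  show ?thesis using ab anb nr by blast
qed

lemma comp_eq:
  assumes "reach S x y" shows "{z. reach S x z} = {z. reach S y z}"
  using assms reach_sym reach_trans by blast

lemma cocirc_cut:
  assumes D: "D \<in> cocircuits E I"
  shows "cut_with_small_side V E ends D"
proof -
  have Dp: "D \<subseteq> E" "hits D" "\<forall>S. S \<subset> D \<longrightarrow> \<not> hits S" using D cocirc_iff by auto
  define H where "H = E - D"
  have HE: "H \<subseteq> E" unfolding H_def by auto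
  have Dc: "\<And>f. f \<in> D \<Longrightarrow> \<exists>x y. ends f = {x, y} \<and> x \<noteq> y \<and> \<not> reach H x y"
    using cocirc_edge[OF D] unfolding H_def by blast
  define comp where "comp x = {z. reach H x z}" for x
  show ?thesis
  proof (cases "\<exists>f\<in>D. \<exists>x\<in>ends f. \<not> has_ray_in V E ends (comp x)")
    case True
    then obtain f x where f: "f \<in> D" "x \<in> ends f" "\<not> has_ray_in V E ends (comp x)" by blast
    obtain a b where ab: "ends f = {a, b}" "a \<noteq> b" "\<not> reach H a b" using Dc[OF f(1)] by blast
    obtain y where y: "ends f = {x, y}" "\<not> reach H x y"
    proof (cases "x = a")
      case True then show ?thesis using that ab by blast
    next
      case False
      then have "x = b" using f(2) ab by auto
      then show ?thesis using that[of a] ab reach_sym by (metis insert_commute)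
    qed
    have fE: "f \<in> E" using f Dp by auto
    have xV: "x \<in> V" "y \<in> V" using ends_sub[OF fE] y by auto
    define Q where "Q = comp x \<inter> V"
    define F where "F = cut_edges E ends Q (V - Q)"
    have FD: "F \<subseteq> D"
    proof
      fix g assume gF: "g \<in> F"
      show "g \<in> D"
      proof (rule ccontr)
        assume gD: "g \<notin> D"
        have gE: "g \<in> E" using gF unfolding F_def cut_edges_def by auto
        then have gH: "g \<in> H" using gD unfolding H_def by auto
        obtain c d where cd: "c \<in> ends g" "c \<in> Q" "d \<in> ends g" "d \<in> V - Q"
          using gF unfolding F_def cut_edges_def by auto
        obtain c' d' where "ends g = {c', d'}" using ends_cases[OF gE] by blast
        then have "ends g = {c, d}" using cd by auto
        then have "adj H c d" using gH unfolding adj_def by blast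
        moreover have "reach H x c" using cd unfolding Q_def comp_def by auto
        ultimately have "reach H x d" using rtranclp.rtrancl_into_rtrancl by metis
        then show False using cd unfolding Q_def comp_def by auto
      qed
    qed
    have fF: "f \<in> F"
    proof -
      have "x \<in> Q" unfolding Q_def comp_def using xV by auto
      moreover have "y \<in> V - Q" unfolding Q_def comp_def using xV y by auto
      ultimately show ?thesis unfolding F_def cut_edges_def using fE y by auto
    qed
    have sm: "small_side V E ends Q"
      using f(3) unfolding small_side_def has_ray_iff Q_def by (metis inf.right_idem)
    have cs: "cut_with_small_side V E ends F"
      unfolding cut_with_small_side_def
      apply (rule exI[of _ Q], rule exI[of _ "V - Q"])
      using sm unfolding F_def Q_def by auto
    have "hits F" using small_cut_hits[OF cs] fF by auto
    then have "F = D" using Dp(3) FD by blast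
    then show ?thesis using cs by simp
  next
    case False
    then have hr: "\<And>f x. f \<in> D \<Longrightarrow> x \<in> ends f \<Longrightarrow> has_ray_in V E ends (comp x)" by blast
    define DV where "DV = \<Union>(ends ` D)"
    define RW where "RW X = (SOME wr. isray E (X \<inter> V) (fst wr) (snd wr))" for X
    have RWp: "isray E (comp x \<inter> V) (fst (RW (comp x))) (snd (RW (comp x)))" if x: "x \<in> DV" for x
    proof -
      obtain f where "f \<in> D" "x \<in> ends f" using x unfolding DV_def by auto
      then have "has_ray_in V E ends (comp x)" using hr by blast
      then obtain w r where "isray E (comp x \<inter> V) w r" unfolding has_ray_iff by auto
      then have "\<exists>wr. isray E (comp x \<inter> V) (fst wr) (snd wr)" by (intro exI[of _ "(w, r)"]) simp
      then show ?thesis unfolding RW_def by (rule someI_ex)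
    qed
    have RWH: "isray H (comp x \<inter> V) (fst (RW (comp x))) (snd (RW (comp x)))" if x: "x \<in> DV" for x
    proof -
      define w where "w = fst (RW (comp x))"
      define r where "r = snd (RW (comp x))"
      have R: "isray E (comp x \<inter> V) w r" using RWp[OF x] unfolding w_def r_def .
      have "r i \<in> H" for i
      proof (rule ccontr)
        assume ni: "r i \<notin> H"
        have riE: "r i \<in> E" and en: "ends (r i) = {w i, w (Suc i)}" and wc: "w i \<in> comp x" "w (Suc i) \<in> comp x"
          using R unfolding isray_def by auto
        then have riD: "r i \<in> D" using ni unfolding H_def by auto
        obtain a b where ab: "ends (r i) = {a, b}" "\<not> reach H a b" using Dc[OF riD] by blast
        have "reach H (w i) (w (Suc i))" using wc unfolding comp_def using reach_sym reach_trans by blast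
        moreover have "(a = w i \<and> b = w (Suc i)) \<or> (a = w (Suc i) \<and> b = w i)"
          using ab en by (auto simp: doubleton_eq_iff)
        ultimately show False using ab(2) reach_sym by blast
      qed
      then show ?thesis using R unfolding isray_def w_def r_def by auto
    qed
    define I0 where "I0 = (\<Union>x\<in>DV. range (snd (RW (comp x))))"
    have I0H: "I0 \<subseteq> H" unfolding I0_def using RWH unfolding isray_def by blast
    have I0ind: "I0 \<in> I"
    proof (rule ccontr)
      assume "I0 \<notin> I"
      then obtain C where C: "C \<in> circuits E I" "C \<subseteq> I0" using dep_circ I0H HE by blast
      have Ccyc: "C \<in> elementary_algebraic_cycles V E ends" using C circ by simp
      have "C \<noteq> {}" using C(1) empty_indep circuit_dep by auto
      then obtain g0 where g0: "g0 \<in> C" by blast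
      then obtain x0 where x0: "x0 \<in> DV" "g0 \<in> range (snd (RW (comp x0)))" using C(2) unfolding I0_def by blast
      obtain v0 where v0: "\<forall>g\<in>C. \<forall>a\<in>ends g. reach H v0 a" using cycle_conn[OF Ccyc] C(2) I0H by blast
      have edge_comp: "\<exists>a\<in>ends g. reach H x a" if xg: "x \<in> DV" "g \<in> range (snd (RW (comp x)))" for x g
      proof -
        obtain t where t: "g = snd (RW (comp x)) t" using xg(2) by (rule rangeE)
        have "fst (RW (comp x)) t \<in> ends g" "fst (RW (comp x)) t \<in> comp x"
          using RWp[OF xg(1)] t unfolding isray_def by auto
        then show ?thesis unfolding comp_def by blast
      qed
      have "C \<subseteq> range (snd (RW (comp x0)))"
      proof
        fix g assume g: "g \<in> C"
        then obtain x1 where x1: "x1 \<in> DV" "g \<in> range (snd (RW (comp x1)))" using C(2) unfolding I0_def by blast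
        obtain a1 where a1: "a1 \<in> ends g" "reach H x1 a1" using edge_comp[OF x1] by blast
        obtain a0 where a0: "a0 \<in> ends g0" "reach H x0 a0" using edge_comp[OF x0] by blast
        have "reach H v0 a1" "reach H v0 a0" using v0 g g0 a0 a1 by auto
        then have "reach H x0 x1" using a0 a1 reach_sym reach_trans by metis
        then have "comp x0 = comp x1" unfolding comp_def by (rule comp_eq)
        then show "g \<in> range (snd (RW (comp x0)))" using x1 by simp
      qed
      then show False using ray_no_cycle[OF RWp[OF x0(1)] Ccyc] by blast
    qed
    obtain J where J: "J \<in> I" "I0 \<subseteq> J" "J \<subseteq> H" "\<forall>z\<in>H-J. insert z J \<notin> I"
      using ext[OF I0ind I0H HE] by blast
    have JE: "J \<subseteq> E" using J(3) HE by auto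
    have jray: "\<exists>w r. isray J UNIV w r \<and> w 0 = x" if x: "x \<in> DV" for x
    proof -
      define w0 where "w0 = fst (RW (comp x))"
      define r0 where "r0 = snd (RW (comp x))"
      have R0: "isray H (comp x \<inter> V) w0 r0" using RWH[OF x] unfolding w0_def r0_def .
      have "range r0 \<subseteq> J" using J(2) x unfolding I0_def r0_def by blast
      then have R0J: "isray J UNIV w0 r0" using R0 unfolding isray_def by auto
      show ?thesis
      proof (cases "reach J x (w0 0)")
        case True then show ?thesis using ray_from[OF R0J True] by blast
      next
        case False
        have "reach H x (w0 0)" using R0 unfolding isray_def comp_def by auto
        then obtain m p q where W: "walk H m p q" "p 0 = x" "p m = w0 0" using walk_of_reach by blast
        obtain i where i: "i < m" "reach J x (p i)" "\<not> reach J x (p (Suc i))"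
          using cross_index[of "reach J x" p m] W False by auto
        define g where "g = q i"
        have gH: "g \<in> H" and gend: "ends g = {p i, p (Suc i)}" using W(1) i unfolding walk_def g_def by auto
        have gJ: "g \<notin> J"
        proof
          assume "g \<in> J"
          then have "adj J (p i) (p (Suc i))" using gend unfolding adj_def by blast
          then show False using i rtranclp.rtrancl_into_rtrancl by metis
        qed
        have "insert g J \<notin> I" using J(4) gH gJ by auto
        moreover have "insert g J \<subseteq> E" using gH HE JE by auto
        ultimately obtain C where C: "C \<in> circuits E I" "C \<subseteq> insert g J" using dep_circ by blast
        have gC: "g \<in> C"
        proof (rule ccontr)
          assume "g \<notin> C"
          then have "C \<subseteq> J" using C(2) by auto
          then show False using J(1) C(1) superset_circ_dep by blast
        qed
        have Ccyc: "C \<in> elementary_algebraic_cycles V E ends" using C circ by simp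
        have oth: "reach J x a = reach J x b" if "e \<in> C" "e \<noteq> g" "ends e = {a, b}" for e a b
        proof -
          have "e \<in> J" using that C(2) by auto
          then have "adj J a b" using that unfolding adj_def by blast
          then show ?thesis using adj_sym rtranclp.rtrancl_into_rtrancl by metis
        qed
        have "\<exists>w r. isray (C - {g}) ({z. reach J x z} \<inter> V) w r"
          apply (rule cycle_cross_ray[where P="reach J x", OF Ccyc gC _ gend i(2,3)])
          apply (rule oth)
            apply assumption+
          done
        then obtain w r where wr: "isray (C - {g}) ({z. reach J x z} \<inter> V) w r" by blast
        have "C - {g} \<subseteq> J" using C(2) by auto
        then have RJ: "isray J UNIV w r" using isray_mono[OF wr] by blast
        have "reach J x (w 0)" using wr unfolding isray_def by auto
        then show ?thesis using ray_from[OF RJ] by blast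
      qed
    qed
    have fdep: "insert f J \<notin> I" if f: "f \<in> D" for f
    proof -
      obtain x y where xy: "ends f = {x, y}" "x \<noteq> y" "\<not> reach H x y" using Dc[OF f] by blast
      have DVxy: "x \<in> DV" "y \<in> DV" using f xy unfolding DV_def by auto
      obtain wx rx where Rx: "isray J UNIV wx rx" "wx 0 = x" using jray[OF DVxy(1)] by blast
      obtain wy ry where Ry: "isray J UNIV wy ry" "wy 0 = y" using jray[OF DVxy(2)] by blast
      have disj: "wx a \<noteq> wy b" for a b
      proof
        assume eq: "wx a = wy b"
        have "reach J x (wx a)" using ray_reach[OF Rx(1)] Rx(2) by metis
        then have "reach H x (wx a)" using reach_mono J(3) by blast
        moreover have "reach J y (wy b)" using ray_reach[OF Ry(1)] Ry(2) by metis
        then have "reach H y (wy b)" using reach_mono J(3) by blast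
        ultimately show False using xy(3) eq reach_sym reach_trans by metis
      qed
      have fE: "f \<in> E" using f Dp by auto
      have fJ: "f \<notin> J" using f J(3) unfolding H_def by auto
      obtain C where C: "double_ray_edges V E ends C" "f \<in> C" "C \<subseteq> insert f J"
        using dr_from_rays[OF fE xy(1) JE fJ Rx Ry disj] by blast
      have "C \<in> circuits E I" using C(1) circ unfolding elementary_algebraic_cycles_def by simp
      then show ?thesis using C(3) superset_circ_dep by blast
    qed
    have Jbase: "maximal_in I J" unfolding maximal_in_def
    proof (intro conjI ballI impI)
      show "J \<in> I" by fact
      fix Y assume Y: "Y \<in> I" "J \<subseteq> Y"
      show "Y = J"
      proof (rule ccontr)
        assume "Y \<noteq> J"
        then obtain z where z: "z \<in> Y" "z \<notin> J" using Y by auto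
        have zE: "z \<in> E" using z Y indep_sub by auto
        have "insert z J \<in> I" using indep_subset[OF Y(1)] z Y(2) by auto
        moreover have "insert z J \<notin> I"
        proof (cases "z \<in> D")
          case True then show ?thesis using fdep by auto
        next
          case False then show ?thesis using J(4) z zE unfolding H_def by auto
        qed
        ultimately show False by simp
      qed
    qed
    have "J \<inter> D = {}" using J(3) unfolding H_def by auto
    then have False using Dp(2) Jbase unfolding hits_def by blast
    then show ?thesis by simp
  qed
qed

end

theorem theorem5p1:
  fixes V :: "'v set" and E :: "'e set" and ends :: "'e \<Rightarrow> 'v set" and \<I> :: "'e set set"
  assumes "graph V E ends"
    and "matroid E \<I>"
    and "circuits E \<I> = elementary_algebraic_cycles V E ends"
  shows "cocircuits E \<I> = {F. skew_cut V E ends F}"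
proof -
  interpret GM E \<I> V ends
    using assms by (unfold_locales) auto
  show ?thesis
  proof (intro equalityI subsetI)
    fix D assume D: "D \<in> cocircuits E \<I>"
    have Dp: "D \<subseteq> E" "hits D" "\<forall>S. S \<subset> D \<longrightarrow> \<not> hits S" using D cocirc_iff by auto
    obtain B where "maximal_in \<I> B" using base_exists by blast
    then have "D \<noteq> {}" using Dp(2) unfolding hits_def by auto
    moreover have "cut_with_small_side V E ends D" using cocirc_cut[OF D] .
    moreover have "\<forall>F'. F' \<subset> D \<and> F' \<noteq> {} \<and> is_cut V E ends F' \<longrightarrow> \<not> cut_with_small_side V E ends F'"
      using Dp(3) small_cut_hits by blast
    ultimately show "D \<in> {F. skew_cut V E ends F}" unfolding skew_cut_def by blast
  next
    fix F assume "F \<in> {F. skew_cut V E ends F}"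
    then have sk: "F \<noteq> {}" "cut_with_small_side V E ends F"
      "\<forall>F'. F' \<subset> F \<and> F' \<noteq> {} \<and> is_cut V E ends F' \<longrightarrow> \<not> cut_with_small_side V E ends F'"
      unfolding skew_cut_def by auto
    obtain A0 B0 where "F = cut_edges E ends A0 B0" using sk(2) unfolding cut_with_small_side_def by blast
    then have FE: "F \<subseteq> E" unfolding cut_edges_def by auto
    have hF: "hits F" using small_cut_hits[OF sk(2,1)] .
    have min: "\<forall>S. S \<subset> F \<longrightarrow> \<not> hits S"
    proof (intro allI impI notI)
      fix S assume S: "S \<subset> F" "hits S"
      then obtain D' where D': "D' \<in> cocircuits E \<I>" "D' \<subseteq> S" using cocirc_in FE by blast
      have cs: "cut_with_small_side V E ends D'" using cocirc_cut[OF D'(1)] .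
      have "hits D'" using D'(1) cocirc_iff by auto
      moreover obtain B where "maximal_in \<I> B" using base_exists by blast
      ultimately have "D' \<noteq> {}" unfolding hits_def by auto
      moreover have "is_cut V E ends D'" using cs unfolding cut_with_small_side_def is_cut_def by blast
      moreover have "D' \<subset> F" using D'(2) S(1) by auto
      ultimately show False using sk(3) cs by blast
    qed
    show "F \<in> cocircuits E \<I>" using cocirc_iff FE hF min by auto
  qed
qed



end
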